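(* Let $H$ be a Hilbert space and $U_{ik}\in B(H)$, $i,k=1,\dots,n$, operators satisfying relations (R1)–(R5). Then $U_{ik}U_{il}=0$ for all $i,k,l$ with $k\neq l$.
   Context: $n\ge2$, $\theta\in M_n(\mathbb R)$ skew-symmetric, $\omega_{ij}=e^{2\pi i\theta_{ij}}$. Relations, for all $i,j,k,l\in\{1,\dots,n\}$: (R1) $U_{ik}U_{jl}+\omega_{ji}U_{jk}U_{il}=\omega_{kl}U_{il}U_{jk}+\omega_{ji}\omega_{kl}U_{jl}U_{ik}$; (R2) $\sum_iU_{ik}U_{il}^*=\delta_{kl}1$; (R3) $\sum_iU_{il}^*U_{ik}=\delta_{kl}1$; (R4) $U_{jk}U_{ik}^*=0$ for $i\neq j$; (R5) $U_{ik}^*U_{jk}=0$ for $i\neq j$. *)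

theory Defs
  imports Complex_Main
begin

text \<open>Complex Hilbert spaces are not in the distribution library, so we introduce
  them as a type class: a complex vector space with a (second-argument linear)
  inner product that is complete with respect to the induced norm.\<close>

class complex_vs = ab_group_add +
  fixes hscale :: "complex \<Rightarrow> 'a \<Rightarrow> 'a"
  assumes hscale_add_right: "hscale a (x + y) = hscale a x + hscale a y"
    and hscale_add_left: "hscale (a + b) x = hscale a x + hscale b x"
    and hscale_hscale: "hscale a (hscale b x) = hscale (a * b) x"
    and hscale_one: "hscale 1 x = x"

class complex_inner_space = complex_vs +
  fixes hinner :: "'a \<Rightarrow> 'a \<Rightarrow> complex"
  assumes hinner_conj: "hinner x y = cnj (hinner y x)"
    and hinner_add_right: "hinner x (y + z) = hinner x y + hinner x z"
    and hinner_scale_right: "hinner x (hscale a y) = a * hinner x y"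
    and hinner_self_real: "Im (hinner x x) = 0"
    and hinner_self_nonneg: "Re (hinner x x) \<ge> 0"
    and hinner_self_eq_0: "hinner x x = 0 \<longleftrightarrow> x = 0"

class complex_hilbert = complex_inner_space +
  assumes complete:
    "(\<forall>e::real>0. \<exists>N::nat. \<forall>m\<ge>N. \<forall>k\<ge>N. sqrt (Re (hinner ((X::nat \<Rightarrow> 'a) m - X k) (X m - X k))) < e)
      \<Longrightarrow> (\<exists>L. \<forall>e::real>0. \<exists>N::nat. \<forall>k\<ge>N. sqrt (Re (hinner (X k - L) (X k - L))) < e)"

definition hnorm :: "'a::complex_inner_space \<Rightarrow> real" where
  "hnorm x = sqrt (Re (hinner x x))"

definition bounded_op :: "('a::complex_inner_space \<Rightarrow> 'a) \<Rightarrow> bool" where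
  "bounded_op T \<longleftrightarrow> (\<forall>x y. T (x + y) = T x + T y) \<and> (\<forall>c x. T (hscale c x) = hscale c (T x))
     \<and> (\<exists>K. \<forall>x. hnorm (T x) \<le> K * hnorm x)"

definition is_adjoint :: "('a::complex_inner_space \<Rightarrow> 'a) \<Rightarrow> ('a \<Rightarrow> 'a) \<Rightarrow> bool" where
  "is_adjoint T S \<longleftrightarrow> bounded_op S \<and> (\<forall>x y. hinner (T x) y = hinner x (S y))"

definition omega :: "(nat \<Rightarrow> nat \<Rightarrow> real) \<Rightarrow> nat \<Rightarrow> nat \<Rightarrow> complex" where
  "omega \<theta> i j = exp (2 * pi * \<i> * complex_of_real (\<theta> i j))"

end

theory Submission
  imports Defs
begin


lemma add_zero_map:
  fixes f :: "'a::ab_group_add \<Rightarrow> 'b::ab_group_add"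
  shows "(\<forall>x y. f (x + y) = f x + f y) \<Longrightarrow> f 0 = 0"
proof -
  assume h: "\<forall>x y. f (x + y) = f x + f y"
  have "f (0 + 0) = f 0 + f 0" using h by blast
  then have e: "f 0 = f 0 + f 0" unfolding add_0_left .
  have "f 0 + 0 = f 0 + f 0" by (subst add_0_right) (rule e)
  then show ?thesis by (rule add_left_imp_eq[symmetric])
qed

lemma hscale_zero_r: "hscale c (0::'a::complex_vs) = 0"
proof -
  have "hscale c (0 + 0) = hscale c (0::'a) + hscale c 0" by (rule hscale_add_right)
  then have e: "hscale c 0 = hscale c (0::'a) + hscale c 0" unfolding add_0_left .
  have "hscale c 0 + 0 = hscale c (0::'a) + hscale c 0" by (subst add_0_right) (rule e)
  then show ?thesis by (rule add_left_imp_eq[symmetric])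
qed

lemma sum_single_nat:
  assumes "i \<in> A" "finite A" "\<forall>j\<in>A. j \<noteq> i \<longrightarrow> f j = 0"
  shows "sum f A = (f i :: 'b::comm_monoid_add)"
proof -
  have "sum f A = f i + sum f (A - {i})" using assms by (simp add: sum.remove)
  also have "sum f (A - {i}) = 0" using assms(3) by (intro sum.neutral) auto
  finally show ?thesis by simp
qed

lemma half_cancel:
  fixes a b :: "'a::complex_vs"
  assumes "a + hscale 1 a = hscale w b + hscale (1 * w) b"
  shows "a = hscale w b"
proof -
  have "hscale 2 a = hscale 2 (hscale w b)"
  proof -
    have "hscale 2 a = hscale (1 + 1) a" by (simp only: one_add_one)
    also have "\<dots> = a + hscale 1 a" by (simp only: hscale_add_left hscale_one)
    also have "\<dots> = hscale w b + hscale (1 * w) b" by (rule assms)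
    also have "\<dots> = hscale (w + w) b" by (simp only: hscale_add_left mult_1)
    also have "\<dots> = hscale (2 * w) b" by (simp only: mult_2)
    also have "\<dots> = hscale 2 (hscale w b)" by (simp only: hscale_hscale)
    finally show ?thesis .
  qed
  then have "hscale (1/2) (hscale 2 a) = hscale (1/2) (hscale 2 (hscale w b))" by (rule arg_cong)
  then have "hscale (1/2 * 2) a = hscale (1/2 * 2) (hscale w b)" by (simp only: hscale_hscale mult.assoc)
  moreover have "(1/2 * 2 :: complex) = 1" by simp
  ultimately show ?thesis by (simp only: hscale_one)
qed

theorem proposition3p13:
  fixes n :: nat and \<theta> :: "nat \<Rightarrow> nat \<Rightarrow> real"
    and U Ustar :: "nat \<Rightarrow> nat \<Rightarrow> 'h::complex_hilbert \<Rightarrow> 'h"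
  assumes n2: "n \<ge> 2"
    and skew: "\<forall>i\<in>{1..n}. \<forall>j\<in>{1..n}. \<theta> i j = - \<theta> j i"
    and bdd: "\<forall>i\<in>{1..n}. \<forall>k\<in>{1..n}. bounded_op (U i k)"
    and adj: "\<forall>i\<in>{1..n}. \<forall>k\<in>{1..n}. is_adjoint (U i k) (Ustar i k)"
    and R1: "\<forall>i\<in>{1..n}. \<forall>j\<in>{1..n}. \<forall>k\<in>{1..n}. \<forall>l\<in>{1..n}. \<forall>x.
        U i k (U j l x) + hscale (omega \<theta> j i) (U j k (U i l x))
      = hscale (omega \<theta> k l) (U i l (U j k x))
        + hscale (omega \<theta> j i * omega \<theta> k l) (U j l (U i k x))"
    and R2: "\<forall>k\<in>{1..n}. \<forall>l\<in>{1..n}. \<forall>x.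
        (\<Sum>i\<in>{1..n}. U i k (Ustar i l x)) = (if k = l then x else 0)"
    and R3: "\<forall>k\<in>{1..n}. \<forall>l\<in>{1..n}. \<forall>x.
        (\<Sum>i\<in>{1..n}. Ustar i l (U i k x)) = (if k = l then x else 0)"
    and R4: "\<forall>i\<in>{1..n}. \<forall>j\<in>{1..n}. \<forall>k\<in>{1..n}. i \<noteq> j \<longrightarrow>
        (\<forall>x. U j k (Ustar i k x) = 0)"
    and R5: "\<forall>i\<in>{1..n}. \<forall>j\<in>{1..n}. \<forall>k\<in>{1..n}. i \<noteq> j \<longrightarrow>
        (\<forall>x. Ustar i k (U j k x) = 0)"
  shows "\<forall>i\<in>{1..n}. \<forall>k\<in>{1..n}. \<forall>l\<in>{1..n}. k \<noteq> l \<longrightarrow>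
        (\<forall>x. U i k (U i l x) = 0)"
proof (intro ballI impI allI)
  fix i k l x assume i: "i \<in> {1..n}" and k: "k \<in> {1..n}" and l: "l \<in> {1..n}" and kl: "k \<noteq> l"
  have Ulin: "\<And>a b. a \<in> {1..n} \<Longrightarrow> b \<in> {1..n} \<Longrightarrow> U a b 0 = 0"
  proof -
    fix a b assume "a \<in> {1..n}" "b \<in> {1..n}"
    then have "bounded_op (U a b)" using bdd by blast
    then show "U a b 0 = 0" unfolding bounded_op_def by (intro add_zero_map) blast
  qed
  have Uslin: "\<And>a b. a \<in> {1..n} \<Longrightarrow> b \<in> {1..n} \<Longrightarrow> Ustar a b 0 = 0"
  proof -
    fix a b assume "a \<in> {1..n}" "b \<in> {1..n}"
    then have "bounded_op (Ustar a b)" using adj unfolding is_adjoint_def by blast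
    then show "Ustar a b 0 = 0" unfolding bounded_op_def by (intro add_zero_map) blast
  qed
  have Usc: "\<And>a b c y. a \<in> {1..n} \<Longrightarrow> b \<in> {1..n} \<Longrightarrow> Ustar a b (hscale c y) = hscale c (Ustar a b y)"
  proof -
    fix a b c y assume "a \<in> {1..n}" "b \<in> {1..n}"
    then have "bounded_op (Ustar a b)" using adj unfolding is_adjoint_def by blast
    then show "Ustar a b (hscale c y) = hscale c (Ustar a b y)" unfolding bounded_op_def by blast
  qed
  have A: "\<And>a b y. a \<in> {1..n} \<Longrightarrow> b \<in> {1..n} \<Longrightarrow> U a b y = U a b (Ustar a b (U a b y))"
  proof -
    fix a b y assume a: "a \<in> {1..n}" and b: "b \<in> {1..n}"
    have "(\<Sum>j\<in>{1..n}. U j b (Ustar j b (U a b y))) = U a b y"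
      using R2[rule_format, OF b b, of "U a b y"] by simp
    moreover have "(\<Sum>j\<in>{1..n}. U j b (Ustar j b (U a b y))) = U a b (Ustar a b (U a b y))"
    proof (rule sum_single_nat[OF a])
      show "\<forall>j\<in>{1..n}. j \<noteq> a \<longrightarrow> U j b (Ustar j b (U a b y)) = 0"
      proof (intro ballI impI)
        fix j assume j: "j \<in> {1..n}" and ja: "j \<noteq> a"
        have "Ustar j b (U a b y) = 0" using R5[rule_format, OF j a b ja] .
        then show "U j b (Ustar j b (U a b y)) = 0" using Ulin[OF j b] by simp
      qed
    qed simp
    ultimately show "U a b y = U a b (Ustar a b (U a b y))" by (rule trans[OF sym])
  qed
  have B1: "\<And>y. Ustar i k (U i l (Ustar i l y)) = 0"
  proof -
    fix y
    have "(\<Sum>j\<in>{1..n}. Ustar j k (U j l (Ustar i l y))) = 0"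
      using R3[rule_format, OF l k, of "Ustar i l y"] kl by simp
    moreover have "(\<Sum>j\<in>{1..n}. Ustar j k (U j l (Ustar i l y))) = Ustar i k (U i l (Ustar i l y))"
    proof (rule sum_single_nat[OF i])
      show "\<forall>j\<in>{1..n}. j \<noteq> i \<longrightarrow> Ustar j k (U j l (Ustar i l y)) = 0"
      proof (intro ballI impI)
        fix j assume j: "j \<in> {1..n}" and ji: "j \<noteq> i"
        have "U j l (Ustar i l y) = 0" using R4[rule_format, OF i j l] ji by blast
        then show "Ustar j k (U j l (Ustar i l y)) = 0" using Uslin[OF j k] by simp
      qed
    qed simp
    ultimately show "Ustar i k (U i l (Ustar i l y)) = 0" by simp
  qed
  have B: "\<And>z. Ustar i k (U i l z) = 0"
  proof -
    fix z
    show "Ustar i k (U i l z) = 0" by (subst A[OF i l, of z]) (rule B1)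
  qed
  have "\<theta> i i = - \<theta> i i" using skew i by blast
  then have th0: "\<theta> i i = 0" by linarith
  have w1: "omega \<theta> i i = 1" by (simp add: omega_def th0)
  have "U i k (U i l x) + hscale 1 (U i k (U i l x))
      = hscale (omega \<theta> k l) (U i l (U i k x)) + hscale (1 * omega \<theta> k l) (U i l (U i k x))"
    using R1[rule_format, OF i i k l, of x] unfolding w1 .
  then have C: "U i k (U i l x) = hscale (omega \<theta> k l) (U i l (U i k x))"
    by (rule half_cancel)
  have "U i k (U i l x) = U i k (Ustar i k (U i k (U i l x)))" using A[OF i k] .
  also have "\<dots> = U i k (hscale (omega \<theta> k l) (Ustar i k (U i l (U i k x))))"
    using C Usc[OF i k] by simp
  also have "\<dots> = 0" using B Ulin[OF i k] by (simp add: hscale_zero_r)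
  finally show "U i k (U i l x) = 0" .
qed

end
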